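(* For $a>0$, real $b$, and $|q|<1$, $$\sum_{i,j\geq 0} \frac{q^{a(i-j)^2+b(i-j)+\frac{j(j+1)}{2}}}{(q;q)_i(q;q)_j} =(-q;q)_\infty \sum_{i,j\geq 0} \frac{q^{a(i-j)^2+b(i-j)+\frac{j(j+1)}{2}+ij}}{(q;q)_i(q^2;q^2)_j}.$$
   Context: Standard $q$-Pochhammer notation: $(a;q)_0=1$, $(a;q)_n=\prod_{k=0}^{n-1}(1-aq^k)$, $(a;q)_\infty=\prod_{k=0}^{\infty}(1-aq^k)$. *)

theory Defs
  imports "HOL-Analysis.Analysis"
begin

definition qpoch :: "complex \<Rightarrow> complex \<Rightarrow> nat \<Rightarrow> complex" where
  "qpoch a q n = (\<Prod>k<n. 1 - a * q ^ k)"

definition qpoch_inf :: "complex \<Rightarrow> complex \<Rightarrow> complex" where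
  "qpoch_inf a q = (\<Prod>k. 1 - a * q ^ k)"

end

theory Submission
  imports Defs
begin

lemma geom_sum_le:
  fixes r :: real assumes "0 \<le> r" "r < 1"
  shows "(\<Sum>k<n. r^k) \<le> 1/(1-r)"
proof -
  have "(\<Sum>k<n. r^k) = (1 - r^n)/(1-r)" using assms by (simp add: sum_gp_strict)
  also have "\<dots> \<le> 1/(1-r)" using assms by (intro divide_right_mono) auto
  finally show ?thesis .
qed

lemma prod_bounds:
  fixes x :: "nat \<Rightarrow> complex" and r :: real
  assumes r: "0 \<le> r" "r < 1" and xb: "\<And>k. norm (x k) \<le> r^(Suc k)"
  shows "norm (\<Prod>k<n. 1 - x k) \<le> exp (1/(1-r))"
    and "(\<Prod>k<n. 1 - x k) \<noteq> 0"
    and "1 / norm (\<Prod>k<n. 1 - x k) \<le> exp (1/(1-r)^2)"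
proof -
  have rk: "r^(Suc k) \<le> r^k" for k using r by (simp add: mult_left_le_one_le)
  have rk1: "r^(Suc k) \<le> r" for k using r power_decreasing[of 1 "Suc k" r] by simp
  have rk2: "r^(Suc k) < 1" for k using rk1[of k] r by linarith
  have "norm (\<Prod>k<n. 1 - x k) = (\<Prod>k<n. norm (1 - x k))" by (simp add: prod_norm)
  also have "\<dots> \<le> (\<Prod>k<n. exp (r^k))"
  proof (rule prod_mono)
    fix k assume "k \<in> {..<n}"
    have "norm (1 - x k) \<le> 1 + norm (x k)" by (metis norm_one norm_triangle_ineq4)
    also have "\<dots> \<le> 1 + r^k" using xb[of k] rk[of k] by simp
    also have "\<dots> \<le> exp (r^k)" by simp
    finally show "0 \<le> norm (1 - x k) \<and> norm (1 - x k) \<le> exp (r^k)" by simp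
  qed
  also have "\<dots> = exp (\<Sum>k<n. r^k)" by (simp add: exp_sum)
  also have "\<dots> \<le> exp (1/(1-r))" using geom_sum_le[OF r] by simp
  finally show "norm (\<Prod>k<n. 1 - x k) \<le> exp (1/(1-r))" .
  have pos: "0 < norm (1 - x k)" for k
  proof -
    have "1 - norm (x k) \<le> norm (1 - x k)" by (metis norm_one norm_triangle_ineq2)
    moreover have "norm (x k) < 1" using xb[of k] rk2[of k] by linarith
    ultimately show ?thesis by linarith
  qed
  show nz: "(\<Prod>k<n. 1 - x k) \<noteq> 0" using pos by (simp add: prod_zero_iff)
  have "1 / norm (\<Prod>k<n. 1 - x k) = (\<Prod>k<n. 1 / norm (1 - x k))"
    by (simp add: prod_norm[symmetric] prod_dividef)
  also have "\<dots> \<le> (\<Prod>k<n. exp (r^k / (1 - r)))"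
  proof (rule prod_mono)
    fix k assume "k \<in> {..<n}"
    have a: "1 - r^(Suc k) \<le> norm (1 - x k)"
      using xb[of k] by (metis diff_left_mono norm_one norm_triangle_ineq2 order_trans)
    have b: "0 < 1 - r^(Suc k)" using rk2[of k] by simp
    have "1 / norm (1 - x k) \<le> 1 / (1 - r^(Suc k))"
      using a b pos[of k] by (intro divide_left_mono) (auto intro!: mult_pos_pos simp del: power_Suc)
    also have "\<dots> = 1 + r^(Suc k) / (1 - r^(Suc k))" using b by (simp add: field_simps)
    also have "\<dots> \<le> exp (r^(Suc k) / (1 - r^(Suc k)))" by simp
    also have "r^(Suc k) / (1 - r^(Suc k)) \<le> r^k / (1 - r)"
      using rk[of k] rk1[of k] b r by (intro frac_le) auto
    hence "exp (r^(Suc k) / (1 - r^(Suc k))) \<le> exp (r^k / (1 - r))" by simp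
    finally show "0 \<le> 1 / norm (1 - x k) \<and> 1 / norm (1 - x k) \<le> exp (r^k / (1 - r))"
      by simp
  qed
  also have "\<dots> = exp (\<Sum>k<n. r^k / (1 - r))" by (simp add: exp_sum)
  also have "\<dots> \<le> exp (1/(1-r)^2)"
  proof -
    have "(\<Sum>k<n. r^k / (1 - r)) = (\<Sum>k<n. r^k) / (1-r)" by (simp add: sum_divide_distrib)
    also have "\<dots> \<le> (1/(1-r)) / (1-r)" using geom_sum_le[OF r] r by (intro divide_right_mono) auto
    also have "\<dots> = 1/(1-r)^2" by (simp add: power2_eq_square)
    finally show ?thesis by simp
  qed
  finally show "1 / norm (\<Prod>k<n. 1 - x k) \<le> exp (1/(1-r)^2)" .
qed

lemma qpoch_Suc: "qpoch a p (Suc n) = qpoch a p n * (1 - a * p^n)"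
  by (simp add: qpoch_def)

lemma qpoch_0[simp]: "qpoch a p 0 = 1"
  by (simp add: qpoch_def)

fun tri :: "nat \<Rightarrow> nat" where
  "tri 0 = 0" | "tri (Suc n) = tri n + Suc n"

fun c2 :: "nat \<Rightarrow> nat" where
  "c2 0 = 0" | "c2 (Suc n) = c2 n + n"

lemma tri_eq: "tri n = n * (n + 1) div 2"
  by (induction n) auto

lemma tri_add: "tri (k + l) = tri k + k * l + tri l"
  by (induction l) auto

lemma c2_tri: "c2 l + l = tri l"
  by (induction l) auto

lemma tri_ge: "n \<le> tri n"
  by (induction n) auto

fun cc :: "complex \<Rightarrow> nat \<Rightarrow> nat \<Rightarrow> complex" where
  "cc q 0 s = (if s = 0 then 1 else 0)"
| "cc q (Suc j) s = cc q j s - q^j * (case s of 0 \<Rightarrow> 0 | Suc s' \<Rightarrow> cc q j s')"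

lemma cc_zero: "j < s \<Longrightarrow> cc q j s = 0"
  by (induction j arbitrary: s) (auto split: nat.split)

lemma cc_0: "cc q j 0 = 1"
  by (induction j) auto

lemma cc_sum: "j \<ge> 1 \<Longrightarrow> (\<Sum>s\<le>j. cc q j s) = 0"
proof -
  have rec: "(\<Sum>s\<le>Suc j. cc q (Suc j) s) = (1 - q^j) * (\<Sum>s\<le>j. cc q j s)" for j
  proof -
    have "(\<Sum>s\<le>Suc j. cc q (Suc j) s) = (\<Sum>s\<le>Suc j. cc q j s)
        - q^j * (\<Sum>s\<le>Suc j. (case s of 0 \<Rightarrow> 0 | Suc s' \<Rightarrow> cc q j s'))"
      by (simp only: cc.simps sum_subtractf sum_distrib_left)
    also have "(\<Sum>s\<le>Suc j. cc q j s) = (\<Sum>s\<le>j. cc q j s)"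
      by (simp add: cc_zero)
    also have "(\<Sum>s\<le>Suc j. (case s of 0 \<Rightarrow> 0 | Suc s' \<Rightarrow> cc q j s')) = (\<Sum>s\<le>j. cc q j s)"
      by (subst sum.atMost_Suc_shift) simp
    finally show ?thesis by (simp add: algebra_simps)
  qed
  assume "j \<ge> 1"
  then show ?thesis
  proof (induction j rule: dec_induct)
    case base then show ?case using rec[of 0] by simp
  next
    case (step n) then show ?case using rec[of n] by simp
  qed
qed

lemma cc_closed:
  "s \<le> j \<Longrightarrow> cc q j s * qpoch q q s * qpoch q q (j - s) = (-1)^s * q^(c2 s) * qpoch q q j"
proof (induction j arbitrary: s)
  case 0 then show ?case by simp
next
  case (Suc j s)
  show ?case
  proof (cases s)
    case 0 then show ?thesis by (simp add: cc_0)
  next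
    case (Suc u)
    show ?thesis
    proof (cases "u = j")
      case True
      have IH: "cc q j j * qpoch q q j = (-1)^j * q^(c2 j) * qpoch q q j"
        using Suc.IH[of j] by simp
      have "cc q (Suc j) s * qpoch q q s * qpoch q q (Suc j - s)
           = (- (q^j)) * (1 - q * q^j) * (cc q j j * qpoch q q j)"
        using Suc True by (simp add: cc_zero qpoch_Suc algebra_simps)
      also have "\<dots> = (-1)^s * q^(c2 s) * qpoch q q (Suc j)"
        unfolding IH using Suc True by (simp only: qpoch_Suc c2.simps power_add power_Suc) (simp add: algebra_simps)
      finally show ?thesis .
    next
      case False
      have "u < j" using Suc Suc.prems False by simp
      then obtain e where "j = Suc (u + e)" using less_iff_Suc_add by auto
      hence j: "j = u + Suc e" by simp
      have IH1: "cc q j (Suc u) * qpoch q q (Suc u) * qpoch q q e = (-1)^(Suc u) * q^(c2 (Suc u)) * qpoch q q j"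
        using Suc.IH[of "Suc u"] j by simp
      have IH2: "cc q j u * qpoch q q u * qpoch q q (Suc e) = (-1)^u * q^(c2 u) * qpoch q q j"
        using Suc.IH[of u] j by simp
      have "cc q (Suc j) s * qpoch q q s * qpoch q q (Suc j - s)
          = (cc q j (Suc u) - q^j * cc q j u) * qpoch q q (Suc u) * qpoch q q (Suc e)"
        using Suc j by simp
      also have "\<dots> = cc q j (Suc u) * qpoch q q (Suc u) * qpoch q q e * (1 - q * q^e)
          - q^j * (cc q j u * qpoch q q u * qpoch q q (Suc e)) * (1 - q * q^u)"
        by (simp add: qpoch_Suc algebra_simps)
      also have "\<dots> = (-1)^(Suc u) * q^(c2 u) * qpoch q q j * (q^u * (1 - q * q^e) + q^j * (1 - q * q^u))"
        unfolding IH1 IH2 by (simp only: c2.simps power_add power_Suc) algebra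
      also have "q^u * (1 - q * q^e) + q^j * (1 - q * q^u) = q^u * (1 - q * q^j)"
        unfolding j by (simp only: power_add power_Suc) algebra
      finally show ?thesis using Suc by (simp only: qpoch_Suc c2.simps power_add power_Suc) (simp add: algebra_simps)
    qed
  qed
qed


lemma summable_bound:
  fixes f :: "'a \<Rightarrow> complex"
  assumes "g summable_on A" "\<And>x. x \<in> A \<Longrightarrow> norm (f x) \<le> g x"
  shows "f summable_on A"
  using Infinite_Sum.abs_summable_on_comparison_test'[OF assms] summable_on_iff_abs_summable_on_complex by blast

lemma geom_has_sum:
  fixes r :: real assumes "0 \<le> r" "r < 1"
  shows "((\<lambda>n. r^n) has_sum 1/(1-r)) UNIV"
proof -
  have "(\<lambda>n. r^n) sums (1/(1-r))" using geometric_sums[of r] assms by simp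
  moreover have "summable (\<lambda>n. norm (r^n))" using assms by (simp add: summable_geometric)
  ultimately show ?thesis using norm_summable_imp_has_sum by blast
qed

lemma geom2_summable:
  fixes r s :: real assumes "0 \<le> r" "r < 1" "0 \<le> s" "s < 1"
  shows "(\<lambda>(m,l). r^m * s^l) summable_on UNIV"
proof -
  have "(\<lambda>(m,l). r^m * s^l) summable_on Sigma UNIV (\<lambda>_. UNIV)"
  proof (rule summable_on_SigmaI[where g = "\<lambda>m. r^m * (1/(1-s))"])
    show "((\<lambda>l. case (m, l) of (m, l) \<Rightarrow> r ^ m * s ^ l) has_sum r ^ m * (1 / (1 - s))) UNIV" for m
      using has_sum_cmult_right[OF geom_has_sum[OF assms(3,4)], of "r^m"] by simp
    show "(\<lambda>m. r ^ m * (1 / (1 - s))) summable_on UNIV"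
      using has_sum_cmult_left[OF geom_has_sum[OF assms(1,2)], of "1/(1-s)"] summable_on_def by blast
  qed (use assms in auto)
  thus ?thesis by simp
qed

locale qctx =
  fixes q :: complex
  assumes q1: "norm q < 1" and q0: "q \<noteq> 0"
begin

definition M :: real where "M = exp (1/(1 - norm q)^2)"

lemma M_ge: "exp (1/(1 - norm q)) \<le> M"
proof -
  have a: "0 < 1 - norm q" "1 - norm q \<le> 1" using q1 by auto
  have "1/(1 - norm q) \<le> 1/(1 - norm q)^2"
    using a by (simp add: divide_simps power2_eq_square)
  thus ?thesis unfolding M_def by simp
qed

lemma M_pos: "0 < M" unfolding M_def by simp

lemma gen_bounds:
  fixes x :: "nat \<Rightarrow> complex"
  assumes "\<And>k. norm (x k) \<le> norm q ^ Suc k"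
  shows "norm (\<Prod>k<n. 1 - x k) \<le> M" "(\<Prod>k<n. 1 - x k) \<noteq> 0"
        "1 / norm (\<Prod>k<n. 1 - x k) \<le> M"
proof -
  have "norm (\<Prod>k<n. 1 - x k) \<le> exp (1/(1 - norm q))"
    using prod_bounds[of "norm q" x n] assms q1 by auto
  thus "norm (\<Prod>k<n. 1 - x k) \<le> M" using M_ge by linarith
  show "(\<Prod>k<n. 1 - x k) \<noteq> 0" "1 / norm (\<Prod>k<n. 1 - x k) \<le> M"
    using prod_bounds[of "norm q" x n] assms q1 unfolding M_def by auto
qed

lemma P_bounds: "norm (qpoch q q n) \<le> M" "qpoch q q n \<noteq> 0" "1 / norm (qpoch q q n) \<le> M"
  using gen_bounds[of "\<lambda>k. q * q^k" n] unfolding qpoch_def by (auto simp: norm_mult norm_power)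

lemma D_bounds: "norm (qpoch (-q) q n) \<le> M" "qpoch (-q) q n \<noteq> 0" "1 / norm (qpoch (-q) q n) \<le> M"
  using gen_bounds[of "\<lambda>k. -q * q^k" n] unfolding qpoch_def by (auto simp: norm_mult norm_power)

lemma Q_eq: "qpoch (q^2) (q^2) n = qpoch q q n * qpoch (-q) q n"
  by (induction n) (simp_all add: qpoch_Suc power2_eq_square power_mult_distrib algebra_simps)

lemma Q_nz: "qpoch (q^2) (q^2) n \<noteq> 0"
  using Q_eq P_bounds D_bounds by simp

lemma Q_inv: "1 / norm (qpoch (q^2) (q^2) n) \<le> M * M"
proof -
  have "1 / norm (qpoch (q^2) (q^2) n) = (1 / norm (qpoch q q n)) * (1 / norm (qpoch (-q) q n))"
    by (simp add: Q_eq norm_mult)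
  also have "\<dots> \<le> M * M" using P_bounds(3) D_bounds(3) M_pos by (intro mult_mono) auto
  finally show ?thesis .
qed

lemma F1: "q^(i*j) / qpoch q q i = (\<Sum>s\<le>i. cc q j s / qpoch q q (i - s))"
proof (induction j arbitrary: i)
  case 0
  have "(\<Sum>s\<le>i. cc q 0 s / qpoch q q (i - s)) = (\<Sum>s\<in>{0}. cc q 0 s / qpoch q q (i - s))"
    by (intro sum.mono_neutral_right) auto
  then show ?case by simp
next
  case (Suc j i)
  have "(\<Sum>s\<le>i. cc q (Suc j) s / qpoch q q (i - s)) = (\<Sum>s\<le>i. cc q j s / qpoch q q (i - s))
     - q^j * (\<Sum>s\<le>i. (case s of 0 \<Rightarrow> 0 | Suc s' \<Rightarrow> cc q j s') / qpoch q q (i - s))"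
    by (simp only: cc.simps diff_divide_distrib sum_subtractf sum_distrib_left times_divide_eq_right)
  also have "(\<Sum>s\<le>i. cc q j s / qpoch q q (i - s)) = q^(i*j) / qpoch q q i" using Suc.IH by simp
  finally have eq: "(\<Sum>s\<le>i. cc q (Suc j) s / qpoch q q (i - s)) = q^(i*j) / qpoch q q i
     - q^j * (\<Sum>s\<le>i. (case s of 0 \<Rightarrow> 0 | Suc s' \<Rightarrow> cc q j s') / qpoch q q (i - s))" .
  show ?case
  proof (cases i)
    case 0 then show ?thesis using eq by simp
  next
    case (Suc i')
    have "(\<Sum>s\<le>i. (case s of 0 \<Rightarrow> 0 | Suc s' \<Rightarrow> cc q j s') / qpoch q q (i - s))
        = (\<Sum>s\<le>i'. cc q j s / qpoch q q (i' - s))"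
      unfolding Suc by (subst sum.atMost_Suc_shift) simp
    also have "\<dots> = q^(i'*j) / qpoch q q i'" using Suc.IH by simp
    finally have "(\<Sum>s\<le>i. cc q (Suc j) s / qpoch q q (i - s))
        = q^(i*j) / qpoch q q i - q^j * (q^(i'*j) / qpoch q q i')" using eq by simp
    also have "\<dots> = q^(i * Suc j) / qpoch q q i"
    proof -
      have nz: "qpoch q q i' \<noteq> 0" "1 - q * q^i' \<noteq> 0"
        using P_bounds(2)[of i] P_bounds(2)[of i'] unfolding Suc by (auto simp: qpoch_Suc)
      have e1: "q^j * q^(i'*j) = q^(Suc i' * j)" by (simp add: power_add[symmetric])
      have e2: "q^(Suc i' * Suc j) = q^(Suc i' * j) * (q * q^i')"
        by (simp add: power_add[symmetric] algebra_simps)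
      have e3: "q^(i*j) = q^(Suc i' * j)" using Suc by simp
      show ?thesis unfolding e3 Suc qpoch_Suc e2 mult.assoc[symmetric] e1 using nz
        by (simp add: field_simps power_add)
    qed
    finally show ?thesis by simp
  qed
qed


definition e :: "complex \<Rightarrow> nat \<Rightarrow> complex" where
  "e z l = q^(c2 l) * z^l / qpoch q q l"

definition E :: "complex \<Rightarrow> complex" where "E z = suminf (e z)"

lemma e_bound: "norm (e z l) \<le> M * norm z ^ l"
proof -
  have "norm (e z l) = norm q ^ c2 l * norm z ^ l * (1 / norm (qpoch q q l))"
    by (simp add: e_def norm_mult norm_divide norm_power)
  also have "\<dots> \<le> 1 * norm z ^ l * M"
    using q1 P_bounds(3)[of l]
    by (intro mult_mono) (auto simp: power_le_one)
  finally show ?thesis by (simp add: mult.commute)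
qed

lemma e_summable:
  assumes "norm z < 1" shows "summable (\<lambda>l. norm (e z l))"
proof (rule summable_comparison_test'[where g = "\<lambda>l. M * norm z ^ l"])
  show "summable (\<lambda>l. M * norm z ^ l)" using assms by (intro summable_mult summable_geometric) auto
qed (use e_bound in auto)

lemma e_sums: "norm z < 1 \<Longrightarrow> e z sums E z"
  unfolding E_def using e_summable summable_norm_cancel summable_sums by blast

lemma e_has_sum: "norm z < 1 \<Longrightarrow> (e z has_sum E z) UNIV"
  using norm_summable_imp_has_sum e_summable e_sums by blast

lemma e_0: "e z 0 = 1" by (simp add: e_def)

lemma e_Suc: "e z (Suc l) = e (z*q) (Suc l) + z * e (z*q) l"
proof -
  have nz: "qpoch q q l \<noteq> 0" "1 - q * q^l \<noteq> 0"
    using P_bounds(2)[of l] P_bounds(2)[of "Suc l"] by (auto simp: qpoch_Suc)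
  show ?thesis unfolding e_def qpoch_Suc c2.simps using nz
    by (simp add: field_simps power_add power_mult_distrib)
qed

lemma E_fun:
  assumes z: "norm z < 1" shows "E z = (1 + z) * E (z*q)"
proof -
  have "norm (z*q) = norm q * norm z" by (simp add: norm_mult)
  also have "\<dots> \<le> norm z" using q1 by (intro mult_left_le_one_le) auto
  finally have zq: "norm (z*q) < 1" using z by linarith
  have s1: "summable (e z)" "summable (e (z*q))" using e_sums z zq sums_summable by blast+
  have s2: "summable (\<lambda>l. e (z*q) (Suc l))" using s1(2) summable_Suc_iff by blast
  have "E z = e z 0 + (\<Sum>l. e z (Suc l))" unfolding E_def using suminf_split_head[OF s1(1)] by simp
  also have "(\<Sum>l. e z (Suc l)) = (\<Sum>l. e (z*q) (Suc l)) + z * E (z*q)"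
  proof -
    have ex: "(\<lambda>l. e z (Suc l)) = (\<lambda>l. e (z*q) (Suc l) + z * e (z*q) l)"
      by (rule ext) (rule e_Suc)
    show ?thesis unfolding ex E_def using s2 s1(2)
      by (subst suminf_add[symmetric]) (auto simp: suminf_mult summable_mult)
  qed
  also have "(\<Sum>l. e (z*q) (Suc l)) = E (z*q) - 1" unfolding E_def using suminf_split_head[OF s1(2)] e_0 by simp
  finally show ?thesis using e_0 by (simp add: algebra_simps)
qed

lemma E_prod: "E q = qpoch (-q) q k * E (q^(Suc k))"
proof (induction k)
  case 0 then show ?case by simp
next
  case (Suc k)
  have "norm q ^ Suc k < 1" using q1 q0 by (intro power_Suc_less_one) auto
  hence "norm (q^Suc k) < 1" by (metis norm_power)
  from E_fun[OF this] have "E (q^Suc k) = (1 + q^Suc k) * E (q^(Suc (Suc k)))"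
    by (simp only: power_Suc mult.commute)
  then show ?case using Suc by (simp add: qpoch_Suc algebra_simps)
qed

lemma E_lim: "(\<lambda>k. E (q^(Suc k))) \<longlonglongrightarrow> 1"
proof -
  let ?r = "norm q"
  have r: "0 \<le> ?r" "?r < 1" using q1 by auto
  have bnd: "norm (E (q^Suc k) - 1) \<le> M * ?r^(Suc k) / (1 - ?r)" for k
  proof -
    let ?z = "q^Suc k"
    have nz: "norm ?z \<le> ?r" using r by (simp add: norm_mult norm_power mult_right_le_one_le power_le_one)
    hence nz1: "norm ?z < 1" using r by linarith
    have "E ?z - 1 = (\<Sum>l. e ?z (Suc l))"
      unfolding E_def using suminf_split_head[OF sums_summable[OF e_sums[OF nz1]]] e_0 by simp
    also have "norm \<dots> \<le> (\<Sum>l. M * norm ?z ^ Suc l)"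
    proof (rule norm_suminf_le)
      show "summable (\<lambda>l. M * norm ?z ^ Suc l)" using nz1
        by (intro summable_mult summable_geometric summable_Suc_iff[THEN iffD2]) auto
      show "norm (e ?z (Suc l)) \<le> M * norm ?z ^ Suc l" for l using e_bound by blast
    qed
    also have "(\<Sum>l. M * norm ?z ^ Suc l) = M * norm ?z / (1 - norm ?z)"
      using nz1 by (simp add: suminf_mult suminf_geometric)
    also have "\<dots> \<le> M * ?r^(Suc k) / (1 - ?r)"
    proof -
      have eqz: "norm ?z = ?r^Suc k" by (rule norm_power)
      show ?thesis unfolding eqz
        by (rule frac_le) (use nz r M_pos eqz in auto)
    qed
    finally show ?thesis .
  qed
  have "(\<lambda>k. ?r^k) \<longlonglongrightarrow> 0" by (rule LIMSEQ_power_zero) (use r in auto)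
  hence "(\<lambda>k. ?r^(Suc k)) \<longlonglongrightarrow> 0" by (rule LIMSEQ_Suc)
  hence "(\<lambda>k. M * ?r^(Suc k) / (1 - ?r)) \<longlonglongrightarrow> M * 0 / (1 - ?r)"
    by (intro tendsto_divide tendsto_mult tendsto_const) (use r in auto)
  hence g0: "(\<lambda>k. M * ?r^(Suc k) / (1 - ?r)) \<longlonglongrightarrow> 0" by simp
  have "(\<lambda>k. E (q^Suc k) - 1) \<longlonglongrightarrow> 0"
    by (rule Lim_null_comparison[OF always_eventually g0]) (use bnd in blast)
  thus ?thesis using LIM_zero_iff by blast
qed

lemma E_q_nz: "E q \<noteq> 0"
proof
  assume "E q = 0"
  hence "E (q^Suc k) = 0" for k using E_prod[of k] D_bounds(2)[of k] by simp
  hence "(\<lambda>k. E (q^(Suc k))) \<longlonglongrightarrow> 0" by simp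
  with E_lim show False using LIMSEQ_unique by fastforce
qed

lemma Dinf: "qpoch_inf (-q) q = E q"
proof -
  have "(\<lambda>k. E q / E (q^(Suc k))) \<longlonglongrightarrow> E q / 1"
    by (intro tendsto_intros E_lim) auto
  moreover have "E q / E (q^(Suc k)) = qpoch (-q) q k" for k
    using E_prod[of k] E_q_nz by (auto simp: field_simps)
  ultimately have "(\<lambda>k. qpoch (-q) q k) \<longlonglongrightarrow> E q" by simp
  hence "(\<lambda>n. qpoch (-q) q (Suc n)) \<longlonglongrightarrow> E q" by (rule LIMSEQ_Suc)
  moreover have "qpoch (-q) q (Suc n) = (\<Prod>i\<le>n. 1 - (-q) * q^(i+0))" for n
    unfolding qpoch_def by (simp add: lessThan_Suc_atMost)
  ultimately have "raw_has_prod (\<lambda>k. 1 - (-q) * q^k) 0 (E q)"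
    unfolding raw_has_prod_def using E_q_nz by simp
  hence "(\<lambda>k. 1 - (-q) * q^k) has_prod E q" unfolding has_prod_def by blast
  thus ?thesis unfolding qpoch_inf_def by (rule has_prod_unique[symmetric])
qed


lemma cc_div: "s \<le> j \<Longrightarrow> cc q j s / qpoch q q j = (-1)^s * q^(c2 s) / (qpoch q q s * qpoch q q (j - s))"
  using cc_closed[of s j q] P_bounds(2)[of s] P_bounds(2)[of "j-s"] P_bounds(2)[of j]
  by (simp add: field_simps)

lemma cc_bound: "norm (cc q j s) \<le> M^3"
proof (cases "s \<le> j")
  case True
  have "cc q j s = (-1)^s * q^(c2 s) * qpoch q q j * (1 / qpoch q q s) * (1 / qpoch q q (j - s))"
    using cc_div[OF True] P_bounds(2)[of j] by (simp add: field_simps)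
  hence "norm (cc q j s) = norm q ^ c2 s * norm (qpoch q q j) * (1 / norm (qpoch q q s)) * (1 / norm (qpoch q q (j - s)))"
    by (simp add: norm_mult norm_divide norm_power)
  also have "\<dots> \<le> 1 * M * M * M"
    using q1 P_bounds[of j] P_bounds[of s] P_bounds[of "j-s"] M_pos
    by (intro mult_mono) (auto simp: power_le_one)
  finally show ?thesis by (simp add: power3_eq_cube)
next
  case False then show ?thesis using cc_zero[of j s q] M_pos by simp
qed

lemma tri_exp: "tri (n+m) + c2 l + Suc (n+m) * l = tri (n + (m + l))"
proof -
  have "tri (n + m + l) = tri (n+m) + (n+m)*l + tri l" by (rule tri_add)
  thus ?thesis using c2_tri[of l] by (simp add: algebra_simps)
qed

definition Y :: "nat \<Rightarrow> nat \<Rightarrow> nat \<Rightarrow> complex" where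
  "Y n m l = cc q (n+m) m * q^(tri (n+m)) / qpoch q q (n+m) * e (q^(Suc (n+m))) l"

lemma Y_diag:
  assumes "m \<le> N"
  shows "Y n m (N - m) = q^(tri (n+N)) * cc q N m / (qpoch q q n * qpoch q q N)"
proof -
  obtain l where l: "N = m + l" using assms le_Suc_ex by blast
  have a: "cc q (n+m) m / qpoch q q (n+m) = (-1)^m * q^(c2 m) / (qpoch q q m * qpoch q q n)"
    using cc_div[of m "n+m"] by simp
  have b: "cc q N m / qpoch q q N = (-1)^m * q^(c2 m) / (qpoch q q m * qpoch q q l)"
    using cc_div[of m N] l by simp
  have p: "q^(tri (n+m)) * (q^(c2 l) * (q^(Suc (n+m)))^l) = q^(tri (n+N))"
    unfolding l tri_exp[symmetric] by (simp add: power_add power_mult power_mult_distrib)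
  have "Y n m (N - m) = (cc q (n+m) m / qpoch q q (n+m)) * (q^(tri (n+m)) * (q^(c2 l) * (q^(Suc (n+m)))^l)) / qpoch q q l"
    unfolding Y_def e_def l by simp
  also have "\<dots> = (-1)^m * q^(c2 m) / (qpoch q q m * qpoch q q l) * q^(tri (n+N)) / qpoch q q n"
    unfolding a p using P_bounds(2)[of n] P_bounds(2)[of l] P_bounds(2)[of m] by (simp add: field_simps)
  also have "\<dots> = q^(tri (n+N)) * cc q N m / (qpoch q q n * qpoch q q N)"
    unfolding b[symmetric] using P_bounds(2)[of n] P_bounds(2)[of N] by (simp add: field_simps)
  finally show ?thesis .
qed

lemma Y_bound: "norm (Y n m l) \<le> M^5 * norm q ^ m * norm q ^ l"
proof -
  have z: "norm (q^(Suc (n+m))) \<le> norm q"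
    using q1 by (simp add: norm_power norm_mult mult_right_le_one_le power_le_one)
  have t: "norm q ^ tri (n+m) \<le> norm q ^ m"
    using q1 tri_ge[of "n+m"] by (intro power_decreasing) auto
  have "norm (Y n m l) = norm (cc q (n+m) m) * norm q ^ tri (n+m) * (1 / norm (qpoch q q (n+m))) * norm (e (q^(Suc (n+m))) l)"
    by (simp add: Y_def norm_mult norm_divide norm_power)
  also have "\<dots> \<le> M^3 * norm q ^ m * M * (M * norm q ^ l)"
  proof (intro mult_mono)
    show "norm (e (q ^ Suc (n + m)) l) \<le> M * norm q ^ l"
      using e_bound[of "q^Suc (n+m)" l] z M_pos
      by (meson mult_left_mono norm_ge_zero order_trans power_mono less_imp_le)
  qed (use cc_bound t P_bounds(3) M_pos in auto)
  finally show ?thesis by (simp add: power_numeral_reduce algebra_simps)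
qed

lemma Y_summable: "(\<lambda>(m,l). Y n m l) summable_on UNIV"
proof (rule summable_bound)
  show "(\<lambda>(m,l). M^5 * (norm q ^ m * norm q ^ l)) summable_on UNIV"
    using summable_on_cmult_right[OF geom2_summable[of "norm q" "norm q"]] q1
    by (simp add: case_prod_unfold)
qed (use Y_bound in \<open>auto simp: algebra_simps\<close>)


lemma Y_total: "((\<lambda>(m,l). Y n m l) has_sum q^(tri n) / qpoch q q n) UNIV"
proof -
  define S where "S = infsum (\<lambda>(m,l). Y n m l) UNIV"
  have hS: "((\<lambda>(m,l). Y n m l) has_sum S) UNIV"
    unfolding S_def using Y_summable by (simp add: summable_iff_has_sum_infsum)
  have "((\<lambda>(N,m). Y n m (N - m)) has_sum S) (Sigma UNIV (\<lambda>N. {..N}))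
      = ((\<lambda>(m,l). Y n m l) has_sum S) UNIV"
    by (rule has_sum_reindex_bij_witness[where j = "\<lambda>(N,m). (m, N - m)" and i = "\<lambda>(m,l). (m + l, m)"])
       auto
  with hS have h2: "((\<lambda>(N,m). Y n m (N - m)) has_sum S) (Sigma UNIV (\<lambda>N. {..N}))" by simp
  have h3: "((\<lambda>N. \<Sum>m\<le>N. Y n m (N - m)) has_sum S) UNIV"
    by (rule has_sum_SigmaD[OF h2]) (auto intro: has_sum_finite)
  have inner: "(\<Sum>m\<le>N. Y n m (N - m)) = (if N = 0 then q^(tri n) / qpoch q q n else 0)" for N
  proof -
    have "(\<Sum>m\<le>N. Y n m (N - m)) = (\<Sum>m\<le>N. q^(tri (n+N)) / (qpoch q q n * qpoch q q N) * cc q N m)"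
      by (intro sum.cong) (auto simp: Y_diag)
    also have "\<dots> = q^(tri (n+N)) / (qpoch q q n * qpoch q q N) * (\<Sum>m\<le>N. cc q N m)"
      by (simp add: sum_distrib_left)
    also have "\<dots> = (if N = 0 then q^(tri n) / qpoch q q n else 0)"
      using cc_sum[of N q] by (cases "N = 0") (auto simp: cc_0)
    finally show ?thesis .
  qed
  have h4: "((\<lambda>N::nat. if N = 0 then q^(tri n) / qpoch q q n else 0) has_sum q^(tri n) / qpoch q q n) UNIV"
  proof -
    have "((\<lambda>N::nat. if N = 0 then q^(tri n) / qpoch q q n else 0) has_sum q^(tri n) / qpoch q q n) {0}"
      using has_sum_finite[of "{0::nat}" "\<lambda>N. if N = 0 then q^(tri n) / qpoch q q n else 0"] by simp
    thus ?thesis by (subst (asm) has_sum_cong_neutral[where T = UNIV and g = "\<lambda>N. if N = 0 then q^(tri n) / qpoch q q n else 0"]) auto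
  qed
  have "S = q^(tri n) / qpoch q q n"
    using h3 h4 unfolding inner by (rule has_sum_unique)
  thus ?thesis using hS by simp
qed

lemma stepD:
  "((\<lambda>m. cc q (n+m) m * q^(tri (n+m)) / qpoch (q^2) (q^2) (n+m)) has_sum q^(tri n) / (qpoch q q n * E q)) UNIV"
proof -
  define X where "X m = cc q (n+m) m * q^(tri (n+m)) / qpoch (q^2) (q^2) (n+m)" for m
  have inner: "((\<lambda>l. Y n m l) has_sum (E q * X m)) UNIV" for m
  proof -
    let ?z = "q^(Suc (n+m))"
    let ?c = "cc q (n+m) m * q^(tri (n+m)) / qpoch q q (n+m)"
    have "norm q ^ Suc (n+m) < 1" using q1 q0 by (intro power_Suc_less_one) auto
    hence nz: "norm ?z < 1" by (metis norm_power)
    have "((\<lambda>l. ?c * e ?z l) has_sum ?c * E ?z) UNIV"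
      by (rule has_sum_cmult_right[OF e_has_sum[OF nz]])
    moreover have "?c * E ?z = E q * X m"
      unfolding X_def E_prod[of "n+m"] Q_eq using D_bounds(2)[of "n+m"] P_bounds(2)[of "n+m"]
      by (simp add: field_simps)
    ultimately show ?thesis unfolding Y_def by simp
  qed
  have "((\<lambda>(m,l). Y n m l) has_sum q^(tri n) / qpoch q q n) (Sigma UNIV (\<lambda>_. UNIV))"
    using Y_total by simp
  hence "((\<lambda>m. E q * X m) has_sum q^(tri n) / qpoch q q n) UNIV"
    by (rule has_sum_SigmaD) (use inner in auto)
  from has_sum_cmult_right[OF this, of "1 / E q"]
  have "((\<lambda>m. X m) has_sum q^(tri n) / (qpoch q q n * E q)) UNIV"
    using E_q_nz by (simp add: field_simps)
  thus ?thesis unfolding X_def .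
qed

end

lemma quad_lower:
  fixes a b k :: real assumes "a > 0"
  shows "a*k^2 + b*k \<ge> \<bar>k\<bar> - (\<bar>b\<bar>+1)^2/(4*a)"
proof -
  have sq: "0 \<le> a*(\<bar>k\<bar> - (\<bar>b\<bar>+1)/(2*a))^2" using assms by simp
  have ex: "a*(\<bar>k\<bar> - (\<bar>b\<bar>+1)/(2*a))^2 = a*k^2 - (\<bar>b\<bar>+1)*\<bar>k\<bar> + (\<bar>b\<bar>+1)^2/(4*a)"
    using assms by (simp add: power2_eq_square field_simps)
  have bk: "b*k \<ge> - (\<bar>b\<bar>*\<bar>k\<bar>)"
    by (metis abs_ge_minus_self abs_mult minus_le_iff)
  show ?thesis using sq ex bk by (simp add: algebra_simps)
qed

lemma w_norm_bound:
  fixes a b r :: real assumes "a > 0" "0 < r" "r < 1"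
  shows "r powr (a*(real i - real j)^2 + b*(real i - real j)) * r^j
         \<le> r powr (- ((\<bar>b\<bar>+1)^2/(4*a))) * (sqrt r ^ i * sqrt r ^ j)"
proof -
  let ?k = "real i - real j"
  let ?C = "(\<bar>b\<bar>+1)^2/(4*a)"
  have "r powr (a*?k^2 + b*?k) \<le> r powr (\<bar>?k\<bar> - ?C)"
    using quad_lower[OF assms(1), of ?k b] assms by (intro powr_mono') auto
  hence "r powr (a*?k^2 + b*?k) * r^j \<le> r powr (\<bar>?k\<bar> - ?C) * r^j"
    using assms by (intro mult_right_mono) auto
  also have "\<dots> = r powr (- ?C) * r powr (\<bar>?k\<bar> + real j)"
  proof -
    have "r powr (\<bar>?k\<bar> - ?C) * r^j = r powr (\<bar>?k\<bar> - ?C) * r powr (real j)"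
      using assms by (simp add: powr_realpow)
    also have "\<dots> = r powr (\<bar>?k\<bar> - ?C + real j)" by (rule powr_add[symmetric])
    also have "\<bar>?k\<bar> - ?C + real j = - ?C + (\<bar>?k\<bar> + real j)" by simp
    also have "r powr \<dots> = r powr (- ?C) * r powr (\<bar>?k\<bar> + real j)" by (rule powr_add)
    finally show ?thesis .
  qed
  also have "r powr (\<bar>?k\<bar> + real j) \<le> r powr (real i / 2 + real j / 2)"
    using assms by (intro powr_mono') auto
  also have "r powr (real i / 2 + real j / 2) = sqrt r ^ i * sqrt r ^ j"
  proof -
    have "sqrt r ^ n = r powr (real n / 2)" for n
    proof -
      have "sqrt r ^ n = sqrt r powr real n" using assms by (simp add: powr_realpow)
      also have "\<dots> = (r powr (1/2)) powr real n" using assms by (simp add: powr_half_sqrt)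
      also have "\<dots> = r powr (real n / 2)" by (simp add: powr_powr)
      finally show ?thesis .
    qed
    thus ?thesis by (simp add: powr_add)
  qed
  finally show ?thesis using assms by (simp add: mult_left_mono)
qed

lemma powr_split:
  fixes q :: complex assumes "q \<noteq> 0"
  shows "q powr complex_of_real (A + real N) = q powr complex_of_real A * q^N"
  using assms by (simp add: powr_add powr_nat')

lemma tri_real: "real (j * (j + 1)) / 2 = real (tri j)"
proof -
  have "even (j * (j+1))" by simp
  thus ?thesis unfolding tri_eq by (simp add: real_of_nat_div)
qed

theorem mainTheorem2:
  fixes a b :: real and q :: complex
  assumes "a > 0" and "q \<noteq> 0" and "norm q < 1"
  defines "L \<equiv> (\<lambda>(i::nat, j::nat).
      q powr complex_of_real (a * (real i - real j)^2 + b * (real i - real j)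
                              + real (j * (j + 1)) / 2)
      / (qpoch q q i * qpoch q q j))"
    and "R \<equiv> (\<lambda>(i::nat, j::nat).
      q powr complex_of_real (a * (real i - real j)^2 + b * (real i - real j)
                              + real (j * (j + 1)) / 2 + real (i * j))
      / (qpoch q q i * qpoch (q^2) (q^2) j))"
  shows "L summable_on UNIV \<and> R summable_on UNIV \<and>
         infsum L UNIV = qpoch_inf (-q) q * infsum R UNIV"
proof -
  interpret qctx q using assms by unfold_locales auto
  define r where "r = norm q"
  have r: "0 < r" "r < 1" using assms by (auto simp: r_def)
  define K where "K = r powr (- ((\<bar>b\<bar>+1)^2/(4*a)))"
  define s where "s = sqrt r"
  have s: "0 \<le> s" "s < 1" using r by (auto simp: s_def)
  have K: "0 \<le> K" unfolding K_def by simp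
  define w where "w i j = q powr complex_of_real (a*(real i - real j)^2 + b*(real i - real j))" for i j :: nat
  have wn: "norm (w i j) * r^j \<le> K * (s^i * s^j)" for i j
  proof -
    have "norm (w i j) = r powr (a*(real i - real j)^2 + b*(real i - real j))"
      unfolding w_def r_def by (simp add: norm_powr_real_powr')
    thus ?thesis using w_norm_bound[OF assms(1) r, of i j b] unfolding K_def s_def by simp
  qed
  have wshift: "w (i - k) (j - k) = w i j" if "k \<le> i" "k \<le> j" for i j k
    unfolding w_def using that by (simp add: of_nat_diff)
  have Lw: "L = (\<lambda>(i,j). w i j * q^tri j / (qpoch q q i * qpoch q q j))"
  proof -
    have "q powr complex_of_real (A + real (j * (j + 1)) / 2) = q powr complex_of_real A * q^tri j" for A j
      unfolding add_divide_distrib tri_real by (rule powr_split[OF assms(2)])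
    note eq = this
    show ?thesis unfolding L_def w_def eq ..
  qed
  have Rw: "R = (\<lambda>(i,j). w i j * q^(tri j + i*j) / (qpoch q q i * qpoch (q^2) (q^2) j))"
  proof -
    have "real (j * (j + 1)) / 2 + real (i * j) = real (tri j + i * j)" for i j :: nat
      by (simp only: tri_real of_nat_add)
    hence "q powr complex_of_real (A + real (j * (j + 1)) / 2 + real (i * j)) = q powr complex_of_real A * q^(tri j + i*j)" for A i j
      unfolding add.assoc by (simp only: powr_split[OF assms(2)])
    note eq = this
    show ?thesis unfolding R_def w_def eq ..
  qed
  have g2: "(\<lambda>(i,j). C * (s^i * s^j)) summable_on UNIV" for C
    using summable_on_cmult_right[OF geom2_summable[OF s s], of C] by (simp add: case_prod_unfold)
  have rq: "norm q ^ n \<le> r ^ m" if "m \<le> n" for m n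
    unfolding r_def using that r unfolding r_def by (intro power_decreasing) auto
  have Lsum: "L summable_on UNIV"
  proof (rule summable_bound[OF g2[of "K * M^2"]])
    fix x :: "nat \<times> nat"
    obtain i j where x: "x = (i,j)" by fastforce
    have "norm (L x) = (norm (w i j) * norm q ^ tri j) * (1 / norm (qpoch q q i)) * (1 / norm (qpoch q q j))"
      unfolding Lw x by (simp add: norm_mult norm_divide norm_power)
    also have "\<dots> \<le> (K * (s^i * s^j)) * M * M"
    proof -
      have h1: "norm (w i j) * norm q ^ tri j \<le> K * (s^i * s^j)"
        using wn[of i j] rq[OF tri_ge[of j]] by (meson mult_left_mono norm_ge_zero order_trans)
      show ?thesis
        by (rule mult_mono[OF mult_mono[OF h1 P_bounds(3)]]) (use K s M_pos P_bounds(3) in auto)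
    qed
    finally show "norm (L x) \<le> (case x of (i, j) \<Rightarrow> K * M^2 * (s^i * s^j))"
      unfolding x by (simp add: power2_eq_square algebra_simps)
  qed
  have Rsum: "R summable_on UNIV"
  proof (rule summable_bound[OF g2[of "K * M^3"]])
    fix x :: "nat \<times> nat"
    obtain i j where x: "x = (i,j)" by fastforce
    have "norm (R x) = (norm (w i j) * norm q ^ (tri j + i*j)) * (1 / norm (qpoch q q i)) * (1 / norm (qpoch (q^2) (q^2) j))"
      unfolding Rw x by (simp add: norm_mult norm_divide norm_power)
    also have "\<dots> \<le> (K * (s^i * s^j)) * M * (M * M)"
    proof -
      have "j \<le> tri j + i * j" using tri_ge[of j] by linarith
      then have h1: "norm (w i j) * norm q ^ (tri j + i*j) \<le> K * (s^i * s^j)"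
        using wn[of i j] rq by (meson mult_left_mono norm_ge_zero order_trans)
      show ?thesis
        by (rule mult_mono[OF mult_mono[OF h1 P_bounds(3)] Q_inv]) (use K s M_pos P_bounds(3) in auto)
    qed
    finally show "norm (R x) \<le> (case x of (i, j) \<Rightarrow> K * M^3 * (s^i * s^j))"
      unfolding x by (simp add: power3_eq_cube algebra_simps)
  qed
  define X where "X n m = cc q (n+m) m * q^(tri (n+m)) / qpoch (q^2) (q^2) (n+m)" for n m
  define H where "H p = (case p of ((t,n),m) \<Rightarrow> w t n / qpoch q q t * X n m)" for p :: "(nat \<times> nat) \<times> nat"
  have g3: "(\<lambda>p. case p of ((t,n),m) \<Rightarrow> C * (s^t * s^n) * r^m) summable_on UNIV" if C: "C \<ge> 0" for C
  proof -
    have "(\<lambda>p. case p of ((t,n),m) \<Rightarrow> C * (s^t * s^n) * r^m) summable_on Sigma UNIV (\<lambda>_. UNIV)"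
    proof (rule summable_on_SigmaI[where g = "\<lambda>(t,n). C * (s^t * s^n) * (1/(1-r))"])
      show "((\<lambda>m. case (x, m) of ((t,n),m) \<Rightarrow> C * (s^t * s^n) * r^m) has_sum
             (case x of (t,n) \<Rightarrow> C * (s^t * s^n) * (1/(1-r)))) UNIV" for x
        using has_sum_cmult_right[OF geom_has_sum[of r], of "case x of (t,n) \<Rightarrow> C * (s^t * s^n)"] r
        by (cases x) simp
      show "(\<lambda>(t,n). C * (s^t * s^n) * (1/(1-r))) summable_on UNIV"
        using g2[of "C * (1/(1-r))"] by (simp add: case_prod_unfold algebra_simps)
    qed (use C s r in \<open>auto split: prod.splits\<close>)
    thus ?thesis by simp
  qed
  have Hb: "norm (H ((t,n),m)) \<le> K * M^6 * (s^t * s^n) * r^m" for t n m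
  proof -
    have "norm (H ((t,n),m)) = norm (w t n) * (1 / norm (qpoch q q t)) * norm (cc q (n+m) m)
          * norm q ^ tri (n+m) * (1 / norm (qpoch (q^2) (q^2) (n+m)))"
      by (simp add: H_def X_def norm_mult norm_divide norm_power)
    also have "\<dots> \<le> norm (w t n) * M * M^3 * r^(n+m) * (M * M)"
      by (intro mult_mono) (use P_bounds(3) Q_inv cc_bound rq[of "n+m" "tri (n+m)"] tri_ge M_pos r in auto)
    also have "\<dots> = (norm (w t n) * r^n) * r^m * M^6"
      by (simp add: power_add algebra_simps power_numeral_reduce)
    also have "\<dots> \<le> (K * (s^t * s^n)) * r^m * M^6"
      using wn[of t n] r M_pos by (intro mult_right_mono) auto
    finally show ?thesis by (simp add: algebra_simps)
  qed
  have Hsum: "H summable_on UNIV"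
  proof (rule summable_bound[OF g3[of "K * M^6"]])
    show "0 \<le> K * M^6" using K M_pos by simp
    fix p :: "(nat \<times> nat) \<times> nat"
    obtain t n m where p: "p = ((t,n),m)" by (metis prod.collapse)
    show "norm (H p) \<le> (case p of ((t,n),m) \<Rightarrow> K * M^6 * (s^t * s^n) * r^m)"
      unfolding p using Hb by simp
  qed
  define SH where "SH = infsum H UNIV"
  have hH: "(H has_sum SH) UNIV" unfolding SH_def using Hsum by (simp add: summable_iff_has_sum_infsum)
  have Eq: "E q \<noteq> 0" by (rule E_q_nz)
  have way2: "SH = infsum L UNIV / E q"
  proof -
    have hH': "(H has_sum SH) (Sigma UNIV (\<lambda>_. UNIV))" using hH by simp
    have inner: "((\<lambda>m. H (x, m)) has_sum L x / E q) UNIV" for x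
    proof -
      obtain t n where x: "x = (t,n)" by fastforce
      have "((\<lambda>m. w t n / qpoch q q t * X n m) has_sum w t n / qpoch q q t * (q^(tri n) / (qpoch q q n * E q))) UNIV"
        by (rule has_sum_cmult_right) (use stepD[of n] in \<open>simp add: X_def\<close>)
      moreover have "w t n / qpoch q q t * (q^(tri n) / (qpoch q q n * E q)) = L x / E q"
        unfolding x Lw using Eq P_bounds(2)[of t] P_bounds(2)[of n] by (simp add: field_simps)
      ultimately show ?thesis unfolding x H_def by simp
    qed
    have a: "((\<lambda>x. L x / E q) has_sum SH) UNIV"
      by (rule has_sum_SigmaD[OF hH']) (use inner in auto)
    have "((\<lambda>x. L x * inverse (E q)) has_sum infsum L UNIV * inverse (E q)) UNIV"
      by (rule has_sum_cmult_left) (use Lsum in \<open>simp add: summable_iff_has_sum_infsum\<close>)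
    hence b: "((\<lambda>x. L x / E q) has_sum infsum L UNIV / E q) UNIV" by (simp add: divide_inverse)
    show ?thesis using has_sum_unique[OF a b] .
  qed
  have way1: "(R has_sum SH) UNIV"
  proof -
    have "((\<lambda>((i,j),k). H ((i-k, j-k), k)) has_sum SH) (Sigma UNIV (\<lambda>(i,j). {..min i j}))
        = (H has_sum SH) UNIV"
      by (rule has_sum_reindex_bij_witness[where j = "\<lambda>((i,j),k). ((i-k, j-k), k)"
                                             and i = "\<lambda>((t,n),m). ((t+m, n+m), m)"]) auto
    with hH have h1: "((\<lambda>((i,j),k). H ((i-k, j-k), k)) has_sum SH) (Sigma UNIV (\<lambda>(i,j). {..min i j}))"
      by simp
    have inner: "((\<lambda>k. case (x, k) of ((i,j),k) \<Rightarrow> H ((i-k, j-k), k)) has_sum R x) (case x of (i,j) \<Rightarrow> {..min i j})" for x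
    proof -
      obtain i j where x: "x = (i,j)" by fastforce
      have "(\<Sum>k\<le>min i j. H ((i-k, j-k), k))
          = (\<Sum>k\<le>min i j. w i j * q^(tri j) / qpoch (q^2) (q^2) j * (cc q j k / qpoch q q (i - k)))"
        by (intro sum.cong) (auto simp: H_def X_def wshift mult_ac)
      also have "\<dots> = w i j * q^(tri j) / qpoch (q^2) (q^2) j * (\<Sum>k\<le>min i j. cc q j k / qpoch q q (i - k))"
        by (simp add: sum_distrib_left)
      also have "(\<Sum>k\<le>min i j. cc q j k / qpoch q q (i - k)) = (\<Sum>k\<le>i. cc q j k / qpoch q q (i - k))"
        by (intro sum.mono_neutral_left) (auto simp: cc_zero)
      also have "\<dots> = q^(i*j) / qpoch q q i" by (rule F1[symmetric])
      also have "w i j * q^(tri j) / qpoch (q^2) (q^2) j * (q^(i*j) / qpoch q q i) = R x"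
        unfolding x Rw by (simp add: power_add field_simps)
      finally have "(\<Sum>k\<le>min i j. H ((i-k, j-k), k)) = R x" .
      thus ?thesis unfolding x using has_sum_finite[of "{..min i j}" "\<lambda>k. H ((i-k, j-k), k)"] by simp
    qed
    show ?thesis by (rule has_sum_SigmaD[OF h1]) (use inner in auto)
  qed
  have "infsum R UNIV = SH" using way1 by (rule infsumI)
  hence "qpoch_inf (-q) q * infsum R UNIV = infsum L UNIV"
    using way2 Dinf Eq by simp
  thus ?thesis using Lsum Rsum by simp
qed

end
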